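(* Let $\mathfrak g=\mathfrak g(\mathfrak l,V,\mathfrak z,\beta)$ be admissible. Then (a) every abelian ideal of $\mathfrak g$ is central, and (b) every ideal of $\mathfrak g$ contained in $V$ is trivial.
   Context: $\mathfrak g$ (finite-dimensional real) is admissible if it contains a pointed (no affine lines), generating (spanning), closed convex subset invariant under $\operatorname{Inn}(\mathfrak g)=\langle e^{\operatorname{ad}\mathfrak g}\rangle$. $\mathfrak g(\mathfrak l,V,\mathfrak z,\beta)$ denotes $\mathfrak z\oplus V\oplus\mathfrak l$ ($\mathfrak l$ reductive, $V$ an $\mathfrak l$-module, $\beta:V\times V\to\mathfrak z$ skew-symmetric and $\mathfrak l$-invariant) with bracket $[(z,v,x),(z',v',x')]=(\beta(v,v'),x.v'-x'.v,[x,x'])$; for an admissible Lie algebra in this form, $\mathfrak z=\mathfrak z(\mathfrak g)$ is the center. *)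

theory Defs
  imports "HOL-Analysis.Analysis"
begin

definition fin_dim_type :: "'a::real_vector itself \<Rightarrow> bool" where
  "fin_dim_type _ \<longleftrightarrow> (\<exists>B::'a set. finite B \<and> span B = UNIV)"

definition lie_algebra :: "('a::real_vector \<Rightarrow> 'a \<Rightarrow> 'a) \<Rightarrow> bool" where
  "lie_algebra br \<longleftrightarrow> bilinear br \<and> (\<forall>x. br x x = 0) \<and>
     (\<forall>x y z. br x (br y z) + br y (br z x) + br z (br x y) = 0)"

definition lie_ideal :: "('a::real_vector \<Rightarrow> 'a \<Rightarrow> 'a) \<Rightarrow> 'a set \<Rightarrow> bool" where
  "lie_ideal br I \<longleftrightarrow> subspace I \<and> (\<forall>x. \<forall>a\<in>I. br x a \<in> I)"

text \<open>Reductive: the adjoint representation is semisimple, i.e. every ideal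
  has a complementary ideal.\<close>
definition reductive :: "('a::real_vector \<Rightarrow> 'a \<Rightarrow> 'a) \<Rightarrow> bool" where
  "reductive br \<longleftrightarrow> lie_algebra br \<and>
     (\<forall>J. lie_ideal br J \<longrightarrow> (\<exists>K. lie_ideal br K \<and> J \<inter> K = {0} \<and> J + K = UNIV))"

definition lie_module :: "('l::real_vector \<Rightarrow> 'l \<Rightarrow> 'l) \<Rightarrow> ('l \<Rightarrow> 'v::real_vector \<Rightarrow> 'v) \<Rightarrow> bool" where
  "lie_module lbr act \<longleftrightarrow> bilinear act \<and>
     (\<forall>x y v. act (lbr x y) v = act x (act y v) - act y (act x v))"

text \<open>beta skew-symmetric and l-invariant (l acts trivially on z).\<close>
definition invariant_skew_form ::
  "('l::real_vector \<Rightarrow> 'v::real_vector \<Rightarrow> 'v) \<Rightarrow> ('v \<Rightarrow> 'v \<Rightarrow> 'z::real_vector) \<Rightarrow> bool" where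
  "invariant_skew_form act \<beta> \<longleftrightarrow> bilinear \<beta> \<and> (\<forall>v w. \<beta> v w = - \<beta> w v) \<and>
     (\<forall>x v w. \<beta> (act x v) w + \<beta> v (act x w) = 0)"

definition gbr :: "('l::real_vector \<Rightarrow> 'l \<Rightarrow> 'l) \<Rightarrow> ('l \<Rightarrow> 'v::real_vector \<Rightarrow> 'v) \<Rightarrow>
    ('v \<Rightarrow> 'v \<Rightarrow> 'z::real_vector) \<Rightarrow> 'z \<times> 'v \<times> 'l \<Rightarrow> 'z \<times> 'v \<times> 'l \<Rightarrow> 'z \<times> 'v \<times> 'l" where
  "gbr lbr act \<beta> a b = (case a of (z, v, x) \<Rightarrow> case b of (z', v', x') \<Rightarrow>
      (\<beta> v v', act x v' - act x' v, lbr x x'))"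

definition exp_ad :: "('a::real_normed_vector \<Rightarrow> 'a \<Rightarrow> 'a) \<Rightarrow> 'a \<Rightarrow> 'a \<Rightarrow> 'a" where
  "exp_ad br x y = (\<Sum>n. (1 / fact n) *\<^sub>R ((br x) ^^ n) y)"

text \<open>Inn(g): the group generated by all e^{ad x} (it is closed under inverses
  since e^{-ad x} is the inverse of e^{ad x}, so the generated monoid suffices;
  we nevertheless generate it explicitly as the closure under composition).\<close>
inductive_set Inn :: "('a::real_normed_vector \<Rightarrow> 'a \<Rightarrow> 'a) \<Rightarrow> ('a \<Rightarrow> 'a) set"
  for br where
  Inn_id: "id \<in> Inn br"
| Inn_step: "\<phi> \<in> Inn br \<Longrightarrow> exp_ad br x \<circ> \<phi> \<in> Inn br"

definition pointed :: "'a::real_vector set \<Rightarrow> bool" where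
  "pointed C \<longleftrightarrow> \<not> (\<exists>p v. v \<noteq> 0 \<and> (\<forall>t::real. p + t *\<^sub>R v \<in> C))"

definition admissible :: "('a::real_normed_vector \<Rightarrow> 'a \<Rightarrow> 'a) \<Rightarrow> bool" where
  "admissible br \<longleftrightarrow> (\<exists>C. closed C \<and> convex C \<and> pointed C \<and> span C = UNIV \<and>
      (\<forall>\<phi>\<in>Inn br. \<phi> ` C \<subseteq> C))"

definition lie_center :: "('a::real_vector \<Rightarrow> 'a \<Rightarrow> 'a) \<Rightarrow> 'a set" where
  "lie_center br = {a. \<forall>b. br a b = 0}"

definition abelian_ideal :: "('a::real_vector \<Rightarrow> 'a \<Rightarrow> 'a) \<Rightarrow> 'a set \<Rightarrow> bool" where
  "abelian_ideal br I \<longleftrightarrow> lie_ideal br I \<and> (\<forall>a\<in>I. \<forall>b\<in>I. br a b = 0)"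

end

theory Submission
  imports Defs
begin

lemma funpow_lin0:
  fixes f :: "'a::real_vector \<Rightarrow> 'a"
  assumes "linear f" shows "(f ^^ n) 0 = 0"
proof -
  have "f 0 = 0" using assms by (rule linear_0)
  thus ?thesis by (induction n) simp_all
qed

lemma abelian_central:
  fixes br :: "'a::real_normed_vector \<Rightarrow> 'a \<Rightarrow> 'a"
  assumes adm: "admissible br" and lin: "\<And>a. linear (br a)"
    and anti: "\<And>a b. br a b = - br b a" and ab: "abelian_ideal br I" and y: "y \<in> I"
  shows "y \<in> lie_center br"
proof -
  obtain C where cl: "closed C" "convex C" and pt: "pointed C" and sp: "span C = UNIV"
    and inv: "\<forall>\<phi>\<in>Inn br. \<phi> ` C \<subseteq> C"
    using adm unfolding admissible_def by blast
  have idl: "subspace I" "\<And>x a. a \<in> I \<Longrightarrow> br x a \<in> I" and abl: "\<And>a b. a\<in>I \<Longrightarrow> b\<in>I \<Longrightarrow> br a b = 0"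
    using ab unfolding abelian_ideal_def lie_ideal_def by auto
  have expf: "exp_ad br u x = x + br u x" if u: "u \<in> I" for u x
  proof -
    have "br x u \<in> I" using idl(2) u by blast
    hence "br u x \<in> I" using anti[of u x] subspace_neg[OF idl(1)] by simp
    hence z: "br u (br u x) = 0" using abl u by blast
    have f: "(1 / fact n) *\<^sub>R ((br u) ^^ n) x = 0" if "n \<notin> {0,1}" for n
    proof -
      have "n \<ge> 2" using that by auto
      then obtain m where "n = Suc (Suc m)" using le_Suc_ex[of 2 n] by auto
      hence "((br u) ^^ n) x = ((br u) ^^ m) (br u (br u x))"
        by (simp add: funpow_Suc_right del: funpow.simps)
      thus ?thesis using z funpow_lin0[OF lin] by simp
    qed
    have "(\<lambda>n. (1 / fact n) *\<^sub>R ((br u) ^^ n) x) sums (\<Sum>n\<in>{0,1}. (1 / fact n) *\<^sub>R ((br u) ^^ n) x)"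
      by (rule sums_finite) (use f in auto)
    thus ?thesis unfolding exp_ad_def by (simp add: sums_iff)
  qed
  have zC: "br y x = 0" if xC: "x \<in> C" for x
  proof (rule ccontr)
    assume ne: "br y x \<noteq> 0"
    have "x + t *\<^sub>R br y x \<in> C" for t
    proof -
      have tI: "t *\<^sub>R y \<in> I" using subspace_scale[OF idl(1) y] .
      have "br (t *\<^sub>R y) x = t *\<^sub>R br y x"
        using anti[of "t *\<^sub>R y" x] anti[of y x] linear_scale[OF lin[of x]] by simp
      moreover have "exp_ad br (t *\<^sub>R y) \<circ> id \<in> Inn br" by (rule Inn_step[OF Inn_id])
      ultimately show ?thesis using inv xC expf[OF tI, of x] by force
    qed
    thus False using pt ne unfolding pointed_def by blast
  qed
  have "br y b = 0" for b
  proof -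
    have "b \<in> span C" using sp by simp
    thus ?thesis using linear_eq_0_on_span[OF lin[of y]] zC by blast
  qed
  thus ?thesis unfolding lie_center_def by simp
qed

theorem lemma2:
  fixes lbr :: "'l::real_normed_vector \<Rightarrow> 'l \<Rightarrow> 'l"
    and act :: "'l \<Rightarrow> 'v::real_normed_vector \<Rightarrow> 'v"
    and \<beta> :: "'v \<Rightarrow> 'v \<Rightarrow> 'z::real_normed_vector"
  assumes "fin_dim_type TYPE('z)" and "fin_dim_type TYPE('v)" and "fin_dim_type TYPE('l)"
    and "reductive lbr"
    and "lie_module lbr act"
    and "invariant_skew_form act \<beta>"
    and "admissible (gbr lbr act \<beta>)"
    and "lie_center (gbr lbr act \<beta>) = {(z, 0, 0) | z. True}"
  shows "(\<forall>I. abelian_ideal (gbr lbr act \<beta>) I \<longrightarrow> I \<subseteq> lie_center (gbr lbr act \<beta>))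
       \<and> (\<forall>I. lie_ideal (gbr lbr act \<beta>) I \<and> I \<subseteq> {(0, v, 0) | v. True} \<longrightarrow> I = {0})"
proof -
  have bl: "bilinear lbr" and ll: "\<And>x. lbr x x = 0"
    using assms(4) unfolding reductive_def lie_algebra_def by auto
  have ba: "bilinear act" using assms(5) unfolding lie_module_def by auto
  have bb: "bilinear \<beta>" and sk: "\<And>v w. \<beta> v w = - \<beta> w v"
    using assms(6) unfolding invariant_skew_form_def by blast+
  have lanti: "lbr a b = - lbr b a" for a b
  proof -
    have "0 = lbr (a+b) (a+b)" using ll by simp
    also have "\<dots> = lbr a a + lbr a b + lbr b a + lbr b b"
      by (simp add: bilinear_ladd[OF bl] bilinear_radd[OF bl])
    finally show ?thesis using ll by (simp add: eq_neg_iff_add_eq_0 add.commute)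
  qed
  let ?g = "gbr lbr act \<beta>"
  have anti: "?g a b = - ?g b a" for a b
  proof -
    obtain z v x where a: "a = (z, v, x)" by (cases a) auto
    obtain z' v' x' where b: "b = (z', v', x')" by (cases b) auto
    show ?thesis using sk[of v v'] lanti[of x x'] by (simp add: a b gbr_def)
  qed
  have lin: "linear (?g a)" for a
  proof (rule linearI)
    fix x y :: "'z \<times> 'v \<times> 'l"
    show "?g a (x + y) = ?g a x + ?g a y"
      by (cases a; cases x; cases y)
        (simp add: gbr_def bilinear_ladd[OF ba] bilinear_radd[OF ba] bilinear_radd[OF bb] bilinear_radd[OF bl])
  next
    fix c :: real and x :: "'z \<times> 'v \<times> 'l"
    show "?g a (c *\<^sub>R x) = c *\<^sub>R ?g a x"
      by (cases a; cases x)
        (simp add: gbr_def bilinear_lmul[OF ba] bilinear_rmul[OF ba] bilinear_rmul[OF bb] bilinear_rmul[OF bl] scale_right_diff_distrib)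
  qed
  have A: "\<forall>I. abelian_ideal ?g I \<longrightarrow> I \<subseteq> lie_center ?g"
    using abelian_central[OF assms(7) lin anti] by blast
  have "I = {0}" if I: "lie_ideal ?g I" "I \<subseteq> {(0, v, 0) | v. True}" for I
  proof -
    have ab: "abelian_ideal ?g I"
      unfolding abelian_ideal_def
    proof (intro conjI ballI)
      fix a b assume a: "a \<in> I" and b: "b \<in> I"
      obtain v where av: "a = (0, v, 0)" using a I(2) by blast
      obtain w where bw: "b = (0, w, 0)" using b I(2) by blast
      have "?g a b \<in> I" using I(1) b unfolding lie_ideal_def by blast
      then obtain u where "?g a b = (0, u, 0)" using I(2) by blast
      moreover have "?g a b = (\<beta> v w, 0, 0)"
        using av bw by (simp add: gbr_def bilinear_lzero[OF ba] ll)
      ultimately show "?g a b = 0" by (simp add: zero_prod_def)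
    qed (use I in simp)
    have "I \<subseteq> lie_center ?g" using A ab by blast
    hence "I \<subseteq> {0}" using I(2) assms(8) by (auto simp: zero_prod_def)
    moreover have "0 \<in> I" using I(1) unfolding lie_ideal_def by (simp add: subspace_0)
    ultimately show ?thesis by blast
  qed
  with A show ?thesis by blast
qed

end
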